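(* Let $c>0$ and let $\boldsymbol\rho=(\rho_j)_{j\ge1}$ be a nonnegative sequence. Let $(\mathbb A_{\boldsymbol\nu,\lambda})_{\boldsymbol\nu\in\mathscr F,\lambda\in\mathbb N_0}$ be real numbers with $\mathbb A_{\boldsymbol\nu,0}=\delta_{\boldsymbol\nu,\boldsymbol 0}$, $\mathbb A_{\boldsymbol\nu,\lambda}=0$ for $\lambda>|\boldsymbol\nu|$, and otherwise $$\mathbb A_{\boldsymbol\nu+\boldsymbol e_j,\lambda}\le\sum_{\boldsymbol m\le\boldsymbol\nu}\binom{\boldsymbol\nu}{\boldsymbol m}c\,\boldsymbol\rho^{\boldsymbol\nu-\boldsymbol m+\boldsymbol e_j}(|\boldsymbol\nu|-|\boldsymbol m|+2)!\,\mathbb A_{\boldsymbol m,\lambda-1},\qquad j\ge1.$$ Then for all $\boldsymbol\nu\ne\boldsymbol0$ and $1\le\lambda\le|\boldsymbol\nu|$, $$\mathbb A_{\boldsymbol\nu,\lambda}\le c^\lambda\boldsymbol\rho^{\boldsymbol\nu}\sum_{k=1}^\lambda\frac{(-1)^{\lambda+k}(|\boldsymbol\nu|+2k-1)!}{(2k-1)!\,(\lambda-k)!\,k!}.$$ Moreover, if both inequalities in the recursion are replaced by equalities, then the conclusion holds with equality.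
   Context: $\mathscr F$ is the set of finitely supported multi-indices $\boldsymbol\nu\in\mathbb N_0^{\mathbb N}$, $|\boldsymbol\nu|=\sum_j\nu_j$, $\boldsymbol e_j$ is the $j$-th unit multi-index, $\boldsymbol m\le\boldsymbol\nu$ means $m_j\le\nu_j$ for all $j$, $\binom{\boldsymbol\nu}{\boldsymbol m}=\prod_j\binom{\nu_j}{m_j}$, $\boldsymbol\rho^{\boldsymbol\nu}=\prod_j\rho_j^{\nu_j}$, and $\delta$ is the Kronecker delta. *)

theory Defs
  imports Complex_Main
begin

text \<open>Multi-indices: finitely supported functions nat \<Rightarrow> nat (coordinates indexed from 0).\<close>

definition msupp :: "(nat \<Rightarrow> nat) \<Rightarrow> nat set" where
  "msupp \<nu> = {j. \<nu> j \<noteq> 0}"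

definition finsupp :: "(nat \<Rightarrow> nat) \<Rightarrow> bool" where
  "finsupp \<nu> \<longleftrightarrow> finite (msupp \<nu>)"

definition mabs :: "(nat \<Rightarrow> nat) \<Rightarrow> nat" where
  "mabs \<nu> = (\<Sum>j\<in>msupp \<nu>. \<nu> j)"

definition mle :: "(nat \<Rightarrow> nat) \<Rightarrow> (nat \<Rightarrow> nat) \<Rightarrow> bool" where
  "mle m \<nu> \<longleftrightarrow> (\<forall>j. m j \<le> \<nu> j)"

definition unitidx :: "nat \<Rightarrow> nat \<Rightarrow> nat" where
  "unitidx j = (\<lambda>i. if i = j then 1 else 0)"

definition mbinom :: "(nat \<Rightarrow> nat) \<Rightarrow> (nat \<Rightarrow> nat) \<Rightarrow> nat" where
  "mbinom \<nu> m = (\<Prod>j\<in>msupp \<nu>. \<nu> j choose m j)"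

definition mpow :: "(nat \<Rightarrow> real) \<Rightarrow> (nat \<Rightarrow> nat) \<Rightarrow> real" where
  "mpow \<rho> \<nu> = (\<Prod>j\<in>msupp \<nu>. \<rho> j ^ \<nu> j)"

definition madd :: "(nat \<Rightarrow> nat) \<Rightarrow> (nat \<Rightarrow> nat) \<Rightarrow> nat \<Rightarrow> nat" where
  "madd \<nu> \<mu> = (\<lambda>i. \<nu> i + \<mu> i)"

definition msub :: "(nat \<Rightarrow> nat) \<Rightarrow> (nat \<Rightarrow> nat) \<Rightarrow> nat \<Rightarrow> nat" where
  "msub \<nu> \<mu> = (\<lambda>i. \<nu> i - \<mu> i)"

end

theory Submission
  imports Defs "HOL-Computational_Algebra.Formal_Power_Series"
begin


definition P :: "nat \<Rightarrow> nat \<Rightarrow> real" where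
  "P i k = (-1)^k * fact k * ((- 2 * of_nat i :: real) gchoose k)"

definition aa :: "nat \<Rightarrow> nat \<Rightarrow> real" where
  "aa k \<mu> = (\<Sum>i\<le>\<mu>. (-1)^(\<mu>+i) * P i k / (fact (\<mu>-i) * fact i))"

lemma fact_plus2: "(fact (m+2) :: real) = 2 * (-1)^m * ((-3::real) gchoose m) * fact m"
proof -
  have "((-3::real) gchoose m) = (-1)^m * ((2 + of_nat m) gchoose m)"
    using gbinomial_minus[of "3::real" m] by (simp add: algebra_simps)
  also have "(2 + of_nat m :: real) = of_nat (m+2)" by simp
  also have "(of_nat (m+2) gchoose m :: real) = of_nat ((m+2) choose m)"
    by (simp only: binomial_gbinomial)
  also have "\<dots> = fact (m+2) / (fact m * fact 2)" by (subst binomial_fact) auto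
  finally have G: "((-3::real) gchoose m) = (-1)^m * (fact (m+2) / (fact m * 2))" by (simp add: fact_numeral)
  have s: "(-1::real)^m * (-1)^m = 1" by (simp add: power_add[symmetric])
  show ?thesis unfolding G using s by (simp add: field_simps)
qed

lemma L1: "(\<Sum>k\<le>n. real (n choose k) * fact (n-k+2) * P i k) = P (Suc i) (Suc n) / of_nat (Suc i)"
proof -
  have "(\<Sum>k\<le>n. real (n choose k) * fact (n-k+2) * P i k)
      = (\<Sum>k\<le>n. 2 * fact n * (-1)^n * (((- 2 * of_nat i :: real) gchoose k) * ((-3) gchoose (n-k))))"
  proof (rule sum.cong[OF refl])
    fix k assume "k \<in> {..n}" then have kn: "k \<le> n" by simp
    have e: "(-1::real)^k * (-1)^(n-k) = (-1)^n"
      using kn by (metis le_add_diff_inverse power_add)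
    show "real (n choose k) * fact (n-k+2) * P i k = 2 * fact n * (-1)^n * (((- 2 * of_nat i :: real) gchoose k) * ((-3) gchoose (n-k)))"
      unfolding P_def fact_plus2 binomial_fact[OF kn] using e
      by (simp add: field_simps)
  qed
  also have "\<dots> = 2 * fact n * (-1)^n * ((- 2 * of_nat i - 3 :: real) gchoose n)"
    using gbinomial_Vandermonde[of "- 2 * of_nat i :: real" "-3" n]
    by (simp add: sum_distrib_left[symmetric] atLeast0AtMost)
  also have "\<dots> = P (Suc i) (Suc n) / of_nat (Suc i)"
  proof -
    have "of_nat (Suc n) * ((- 2 * of_nat (Suc i) :: real) gchoose Suc n) = (- 2 * of_nat (Suc i)) * ((- 2 * of_nat (Suc i) - 1) gchoose n)"
      by (rule gbinomial_absorption)
    moreover have "(- 2 * of_nat (Suc i) - 1 :: real) = - 2 * of_nat i - 3" by simp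
    ultimately have h0: "of_nat (Suc n) * ((- 2 * of_nat (Suc i) :: real) gchoose Suc n) = (- 2 * of_nat (Suc i)) * ((- 2 * of_nat i - 3) gchoose n)" by metis
    note h = h0
    have "P (Suc i) (Suc n) = (-1)^(Suc n) * fact n * (of_nat (Suc n) * ((- 2 * of_nat (Suc i) :: real) gchoose Suc n))"
      unfolding P_def by (simp add: algebra_simps)
    also have "\<dots> = (-1)^(Suc n) * fact n * ((- 2 * of_nat (Suc i)) * ((- 2 * of_nat i - 3) gchoose n))"
      by (simp only: h)
    finally show ?thesis by (simp add: field_simps)
  qed
  finally show ?thesis .
qed

lemma P0: "P 0 k = (if k = 0 then 1 else 0)"
  unfolding P_def by (simp add: gbinomial_0_left)

lemma Pk0: "P i 0 = 1"
  unfolding P_def by simp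

lemma L2: "(\<Sum>k\<le>n. real (n choose k) * fact (n-k+2) * aa k \<mu>) = aa (Suc n) (Suc \<mu>)"
proof -
  have "(\<Sum>k\<le>n. real (n choose k) * fact (n-k+2) * aa k \<mu>)
      = (\<Sum>k\<le>n. \<Sum>i\<le>\<mu>. (-1)^(\<mu>+i) / (fact (\<mu>-i) * fact i) * (real (n choose k) * fact (n-k+2) * P i k))"
    unfolding aa_def by (simp add: sum_distrib_left sum_distrib_right mult_ac)
  also have "\<dots> = (\<Sum>i\<le>\<mu>. (-1)^(\<mu>+i) / (fact (\<mu>-i) * fact i) * (\<Sum>k\<le>n. real (n choose k) * fact (n-k+2) * P i k))"
    by (subst sum.swap) (simp add: sum_distrib_left)
  also have "\<dots> = (\<Sum>i\<le>\<mu>. (-1)^(Suc \<mu>+Suc i) * P (Suc i) (Suc n) / (fact (Suc \<mu> - Suc i) * fact (Suc i)))"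
    by (rule sum.cong[OF refl]) (simp only: L1, simp add: field_simps power_add)
  also have "\<dots> = aa (Suc n) (Suc \<mu>)"
    unfolding aa_def by (subst sum.atMost_Suc_shift) (simp add: P0)
  finally show ?thesis .
qed

lemma L3: "\<mu> > 0 \<Longrightarrow> aa 0 \<mu> = 0"
proof -
  assume m: "\<mu> > 0"
  have "aa 0 \<mu> = (\<Sum>i\<le>\<mu>. ((-1)^\<mu> / fact \<mu>) * ((-1)^i * of_nat (\<mu> choose i)))"
    unfolding aa_def Pk0
  proof (rule sum.cong[OF refl])
    fix i assume "i \<in> {..\<mu>}" then have i: "i \<le> \<mu>" by simp
    show "(-1)^(\<mu>+i) * 1 / (fact (\<mu>-i) * fact i) = ((-1)^\<mu> / fact \<mu>) * ((-1)^i * of_nat (\<mu> choose i) :: real)"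
      by (simp add: binomial_fact[OF i] power_add field_simps)
  qed
  also have "\<dots> = 0" by (subst sum_distrib_left[symmetric]) (simp add: choose_alternating_sum[OF m])
  finally show ?thesis .
qed

lemma L4: "k < \<mu> \<Longrightarrow> aa k \<mu> = 0"
proof (induction k arbitrary: \<mu> rule: less_induct)
  case (less k)
  show ?case
  proof (cases k)
    case 0 then show ?thesis using less.prems L3 by simp
  next
    case (Suc n)
    then obtain \<mu>' where mu: "\<mu> = Suc \<mu>'" using less.prems by (cases \<mu>) auto
    have "aa k \<mu> = (\<Sum>j\<le>n. real (n choose j) * fact (n-j+2) * aa j \<mu>')"
      using L2 Suc mu by simp
    also have "\<dots> = 0"
      by (rule sum.neutral) (use less.IH less.prems Suc mu in auto)
    finally show ?thesis .
  qed
qed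

lemma L5: "aa k 0 = (if k = 0 then 1 else 0)"
  unfolding aa_def by (simp add: P0)

lemma Pfact: "1 \<le> i \<Longrightarrow> P i n = fact (n + 2*i - 1) / fact (2*i - 1)"
proof -
  assume i: "1 \<le> i"
  have "((- 2 * of_nat i :: real) gchoose n) = (-1)^n * ((of_nat (2*i) + of_nat n - 1) gchoose n)"
    using gbinomial_minus[of "of_nat (2*i) :: real" n] by simp
  also have "(of_nat (2*i) + of_nat n - 1 :: real) = of_nat (n + 2*i - 1)" using i by simp
  also have "(of_nat (n + 2*i - 1) gchoose n :: real) = of_nat ((n + 2*i - 1) choose n)"
    by (simp only: binomial_gbinomial)
  also have "\<dots> = fact (n + 2*i - 1) / (fact n * fact (2*i - 1))"
    by (subst binomial_fact) (use i in auto)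
  finally have g: "((- 2 * of_nat i :: real) gchoose n) = (-1)^n * (fact (n + 2*i - 1) / (fact n * fact (2*i - 1)))" .
  have s: "(-1::real)^n * (-1)^n = 1" by (simp add: power_add[symmetric])
  show ?thesis unfolding P_def g using s by (simp add: field_simps)
qed

lemma L6: "1 \<le> n \<Longrightarrow> aa n l = (\<Sum>k=1..l. (-1) ^ (l + k) * fact (n + 2 * k - 1)
                  / (fact (2 * k - 1) * fact (l - k) * fact k))"
proof -
  assume n: "1 \<le> n"
  have "{..l} = insert 0 {1..l}" by auto
  then have "aa n l = (\<Sum>i=1..l. (-1)^(l+i) * P i n / (fact (l-i) * fact i))"
    unfolding aa_def using n by (simp add: P0)
  also have "\<dots> = (\<Sum>k=1..l. (-1) ^ (l + k) * fact (n + 2 * k - 1)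
                  / (fact (2 * k - 1) * fact (l - k) * fact k))"
    by (rule sum.cong[OF refl]) (simp add: Pfact field_simps)
  finally show ?thesis .
qed



lemma msupp_zero[simp]: "msupp (\<lambda>_. 0) = {}" by (simp add: msupp_def)
lemma finsupp_zero[simp]: "finsupp (\<lambda>_. 0)" by (simp add: finsupp_def)
lemma mabs_zero[simp]: "mabs (\<lambda>_. 0) = 0" by (simp add: mabs_def)
lemma mpow_zero[simp]: "mpow \<rho> (\<lambda>_. 0) = 1" by (simp add: mpow_def)

lemma msupp_madd: "msupp (madd a b) = msupp a \<union> msupp b"
  by (auto simp: msupp_def madd_def)
lemma msupp_unitidx: "msupp (unitidx j) = {j}"
  by (auto simp: msupp_def unitidx_def)
lemma finsupp_madd: "finsupp a \<Longrightarrow> finsupp b \<Longrightarrow> finsupp (madd a b)"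
  by (simp add: finsupp_def msupp_madd)
lemma finsupp_unitidx: "finsupp (unitidx j)"
  by (simp add: finsupp_def msupp_unitidx)
lemma msupp_mle: "mle m \<nu> \<Longrightarrow> msupp m \<subseteq> msupp \<nu>"
proof
  fix x assume a: "mle m \<nu>" and x: "x \<in> msupp m"
  then have "m x \<noteq> 0" "m x \<le> \<nu> x" by (auto simp: msupp_def mle_def)
  then have "\<nu> x \<noteq> 0" by simp
  then show "x \<in> msupp \<nu>" by (simp add: msupp_def)
qed
lemma finsupp_mle: "mle m \<nu> \<Longrightarrow> finsupp \<nu> \<Longrightarrow> finsupp m"
  unfolding finsupp_def by (rule finite_subset[OF msupp_mle])
lemma msupp_msub: "msupp (msub \<nu> m) \<subseteq> msupp \<nu>"
  by (auto simp: msupp_def msub_def)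
lemma finsupp_msub: "finsupp \<nu> \<Longrightarrow> finsupp (msub \<nu> m)"
  unfolding finsupp_def by (rule finite_subset[OF msupp_msub])

lemma mabs_sub: "finite S \<Longrightarrow> msupp \<nu> \<subseteq> S \<Longrightarrow> mabs \<nu> = (\<Sum>j\<in>S. \<nu> j)"
  unfolding mabs_def by (rule sum.mono_neutral_left) (auto simp: msupp_def)
lemma mpow_sub: "finite S \<Longrightarrow> msupp \<nu> \<subseteq> S \<Longrightarrow> mpow \<rho> \<nu> = (\<Prod>j\<in>S. \<rho> j ^ \<nu> j)"
  unfolding mpow_def by (rule prod.mono_neutral_left) (auto simp: msupp_def)
lemma mbinom_sub: "finite S \<Longrightarrow> msupp \<nu> \<subseteq> S \<Longrightarrow> mle m \<nu> \<Longrightarrow> mbinom \<nu> m = (\<Prod>j\<in>S. \<nu> j choose m j)"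
proof -
  assume f: "finite S" and s: "msupp \<nu> \<subseteq> S" and a: "mle m \<nu>"
  have "\<forall>i\<in>S - msupp \<nu>. (\<nu> i choose m i) = 1"
  proof
    fix i assume "i \<in> S - msupp \<nu>"
    then have "\<nu> i = 0" by (simp add: msupp_def)
    moreover have "m i \<le> \<nu> i" using a by (simp add: mle_def)
    ultimately show "(\<nu> i choose m i) = 1" by simp
  qed
  then show ?thesis unfolding mbinom_def by (intro prod.mono_neutral_left f s)
qed

lemma mabs_madd: "finsupp a \<Longrightarrow> finsupp b \<Longrightarrow> mabs (madd a b) = mabs a + mabs b"
proof -
  assume fa: "finsupp a" and fb: "finsupp b"
  let ?S = "msupp a \<union> msupp b"
  have f: "finite ?S" using fa fb by (simp add: finsupp_def)
  have "mabs (madd a b) = (\<Sum>j\<in>?S. madd a b j)" by (rule mabs_sub[OF f]) (simp add: msupp_madd)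
  also have "\<dots> = sum a ?S + sum b ?S" by (simp add: madd_def sum.distrib)
  also have "sum a ?S = mabs a" by (rule mabs_sub[OF f, symmetric]) auto
  also have "sum b ?S = mabs b" by (rule mabs_sub[OF f, symmetric]) auto
  finally show ?thesis .
qed

lemma mpow_madd: "finsupp a \<Longrightarrow> finsupp b \<Longrightarrow> mpow \<rho> (madd a b) = mpow \<rho> a * mpow \<rho> b"
proof -
  assume fa: "finsupp a" and fb: "finsupp b"
  let ?S = "msupp a \<union> msupp b"
  have f: "finite ?S" using fa fb by (simp add: finsupp_def)
  have "mpow \<rho> (madd a b) = (\<Prod>j\<in>?S. \<rho> j ^ madd a b j)" by (rule mpow_sub[OF f]) (simp add: msupp_madd)
  also have "\<dots> = (\<Prod>j\<in>?S. \<rho> j ^ a j) * (\<Prod>j\<in>?S. \<rho> j ^ b j)" by (simp add: madd_def power_add prod.distrib)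
  also have "(\<Prod>j\<in>?S. \<rho> j ^ a j) = mpow \<rho> a" by (rule mpow_sub[OF f, symmetric]) auto
  also have "(\<Prod>j\<in>?S. \<rho> j ^ b j) = mpow \<rho> b" by (rule mpow_sub[OF f, symmetric]) auto
  finally show ?thesis .
qed

lemma mabs_unitidx: "mabs (unitidx j) = 1"
  unfolding mabs_def msupp_unitidx by (simp add: unitidx_def)

lemma mabs_zero_iff: "finsupp \<nu> \<Longrightarrow> mabs \<nu> = 0 \<longleftrightarrow> \<nu> = (\<lambda>_. 0)"
  unfolding mabs_def finsupp_def by (auto simp: msupp_def)

lemma mle_split: "mle m \<nu> \<Longrightarrow> \<nu> = madd m (msub \<nu> m)"
proof (rule ext)
  fix i assume "mle m \<nu>"
  then have "m i \<le> \<nu> i" by (simp add: mle_def)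
  then show "\<nu> i = madd m (msub \<nu> m) i" by (simp add: madd_def msub_def)
qed

lemma mabs_mle: "mle m \<nu> \<Longrightarrow> finsupp \<nu> \<Longrightarrow> mabs \<nu> = mabs m + mabs (msub \<nu> m)"
proof -
  assume a: "mle m \<nu>" and f: "finsupp \<nu>"
  have "mabs \<nu> = mabs (madd m (msub \<nu> m))" by (rule arg_cong[OF mle_split[OF a]])
  also have "\<dots> = mabs m + mabs (msub \<nu> m)"
    by (rule mabs_madd) (use finsupp_mle[OF a f] finsupp_msub[OF f] in auto)
  finally show ?thesis .
qed

lemma finite_mle: "finsupp \<nu> \<Longrightarrow> finite {m. mle m \<nu>}"
proof -
  assume f: "finsupp \<nu>"
  let ?S = "msupp \<nu>"
  have "{m. mle m \<nu>} \<subseteq> (\<lambda>g i. if i \<in> ?S then g i else 0) ` (PiE ?S (\<lambda>i. {0..\<nu> i}))"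
  proof
    fix m assume m: "m \<in> {m. mle m \<nu>}"
    have "m = (\<lambda>i. if i \<in> ?S then restrict m ?S i else 0)"
    proof
      fix i
      have "m i \<le> \<nu> i" using m by (simp add: mle_def)
      then show "m i = (if i \<in> ?S then restrict m ?S i else 0)"
        by (cases "i \<in> ?S") (auto simp: msupp_def)
    qed
    moreover have "restrict m ?S \<in> PiE ?S (\<lambda>i. {0..\<nu> i})" using m by (auto simp: mle_def)
    ultimately show "m \<in> (\<lambda>g i. if i \<in> ?S then g i else 0) ` (PiE ?S (\<lambda>i. {0..\<nu> i}))" by (rule image_eqI)
  qed
  moreover have "finite (PiE ?S (\<lambda>i. {0..\<nu> i}))" using f by (simp add: finsupp_def finite_PiE)
  ultimately show ?thesis by (meson finite_subset finite_imageI)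
qed

lemma decomp: "finsupp \<nu> \<Longrightarrow> \<nu> \<noteq> (\<lambda>_. 0) \<Longrightarrow> \<exists>\<nu>' j. finsupp \<nu>' \<and> \<nu> = madd \<nu>' (unitidx j)"
proof -
  assume f: "finsupp \<nu>" and n: "\<nu> \<noteq> (\<lambda>_. 0)"
  have "\<exists>j. \<nu> j \<noteq> 0"
  proof (rule ccontr)
    assume "\<not> (\<exists>j. \<nu> j \<noteq> 0)"
    then have "\<nu> = (\<lambda>_. 0)" by (intro ext) blast
    with n show False by simp
  qed
  then obtain j where j: "\<nu> j \<noteq> 0" by blast
  let ?\<nu>' = "\<nu>(j := \<nu> j - 1)"
  have "msupp ?\<nu>' \<subseteq> msupp \<nu>" by (auto simp: msupp_def)
  then have "finsupp ?\<nu>'" using f unfolding finsupp_def by (rule finite_subset)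
  moreover have "\<nu> = madd ?\<nu>' (unitidx j)"
  proof (rule ext)
    fix i show "\<nu> i = madd ?\<nu>' (unitidx j) i" using j by (simp add: madd_def unitidx_def)
  qed
  ultimately show ?thesis by (intro exI conjI)
qed



lemma pascal1: "(\<Sum>k\<le>n. real (n choose k) * f k) + (\<Sum>k\<le>n. real (n choose k) * f (Suc k))
   = (\<Sum>k\<le>Suc n. real (Suc n choose k) * f k)"
proof -
  have A: "(\<Sum>k\<le>n. real (n choose k) * f k) = (\<Sum>k\<le>Suc n. real (n choose k) * f k)" by simp
  have B: "(\<Sum>k\<le>Suc n. real (n choose k) * f k) = f 0 + (\<Sum>k\<le>n. real (n choose Suc k) * f (Suc k))"
    by (subst sum.atMost_Suc_shift) simp
  have C: "(\<Sum>k\<le>Suc n. real (Suc n choose k) * f k) = f 0 + (\<Sum>k\<le>n. real (Suc n choose Suc k) * f (Suc k))"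
    by (subst sum.atMost_Suc_shift) simp
  show ?thesis unfolding A B C by (simp add: sum.distrib algebra_simps)
qed

lemma choose_Suc_split: "(Suc x choose y) = (x choose y) + (if y = 0 then 0 else (x choose (y - 1)))"
  by (cases y) auto

lemma mle_zero: "mle m (\<lambda>_. 0) \<longleftrightarrow> m = (\<lambda>_. 0)"
  by (auto simp: mle_def fun_eq_iff)

lemma mvand: "finsupp \<nu> \<Longrightarrow> (\<Sum>m\<in>{m. mle m \<nu>}. real (mbinom \<nu> m) * f (mabs m))
    = (\<Sum>k\<le>mabs \<nu>. real (mabs \<nu> choose k) * f k)"
proof (induction "mabs \<nu>" arbitrary: \<nu> f)
  case 0
  then have z: "\<nu> = (\<lambda>_. 0)" using mabs_zero_iff by simp
  have "{m. mle m \<nu>} = {\<lambda>_. 0}" unfolding z mle_zero by auto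
  then show ?case using z by (simp add: mbinom_def)
next
  case (Suc n)
  have nz: "\<nu> \<noteq> (\<lambda>_. 0)" using Suc.hyps(2) by auto
  obtain \<nu>' j where f': "finsupp \<nu>'" and nu: "\<nu> = madd \<nu>' (unitidx j)"
    using decomp[OF Suc.prems nz] by blast
  have n: "n = mabs \<nu>'" using Suc.hyps(2) nu mabs_madd[OF f' finsupp_unitidx] mabs_unitidx by simp
  define S where "S = msupp \<nu>"
  have fS: "finite S" using Suc.prems by (simp add: S_def finsupp_def)
  have jS: "j \<in> S" by (simp add: S_def nu msupp_madd msupp_unitidx)
  have sS: "msupp \<nu>' \<subseteq> S" by (simp add: S_def nu msupp_madd)
  have nuj: "\<nu> j = Suc (\<nu>' j)" by (simp add: nu madd_def unitidx_def)
  have nui: "\<And>i. i \<noteq> j \<Longrightarrow> \<nu> i = \<nu>' i" by (simp add: nu madd_def unitidx_def)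
  define Q where "Q m = (\<Prod>i\<in>S-{j}. real (\<nu>' i choose m i))" for m
  define M where "M = {m. mle m \<nu>}"
  define M' where "M' = {m. mle m \<nu>'}"
  have fM: "finite M" unfolding M_def by (rule finite_mle[OF Suc.prems])
  have fM': "finite M'" unfolding M'_def by (rule finite_mle[OF f'])
  have M'M: "M' \<subseteq> M"
  proof
    fix m assume mM: "m \<in> M'"
    show "m \<in> M" unfolding M_def mle_def
    proof (intro CollectI allI)
      fix i
      have "m i \<le> \<nu>' i" using mM by (simp add: M'_def mle_def)
      also have "\<nu>' i \<le> \<nu> i" by (simp add: nu madd_def)
      finally show "m i \<le> \<nu> i" .
    qed
  qed
  have a: "real (mbinom \<nu> m) = real (\<nu>' j choose m j) * Q m
      + (if m j = 0 then 0 else real (\<nu>' j choose (m j - 1)) * Q m)" for m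
  proof -
    have "real (mbinom \<nu> m) = (\<Prod>i\<in>S. real (\<nu> i choose m i))"
      by (simp add: mbinom_def S_def)
    also have "\<dots> = real (\<nu> j choose m j) * (\<Prod>i\<in>S-{j}. real (\<nu> i choose m i))"
      by (rule prod.remove[OF fS jS])
    also have "(\<Prod>i\<in>S-{j}. real (\<nu> i choose m i)) = Q m"
      unfolding Q_def by (rule prod.cong) (auto simp: nui)
    finally show ?thesis by (simp add: nuj choose_Suc_split algebra_simps)
  qed
  have pr': "mle m' \<nu>' \<Longrightarrow> real (mbinom \<nu>' m') = real (\<nu>' j choose m' j) * (\<Prod>i\<in>S-{j}. real (\<nu>' i choose m' i))" for m'
  proof -
    assume "mle m' \<nu>'"
    then have "real (mbinom \<nu>' m') = (\<Prod>i\<in>S. real (\<nu>' i choose m' i))"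
      by (simp add: mbinom_sub[OF fS sS])
    also have "\<dots> = real (\<nu>' j choose m' j) * (\<Prod>i\<in>S-{j}. real (\<nu>' i choose m' i))"
      by (rule prod.remove[OF fS jS])
    finally show ?thesis .
  qed
  have b: "m \<in> M \<Longrightarrow> real (\<nu>' j choose m j) * Q m = (if mle m \<nu>' then real (mbinom \<nu>' m) else 0)" for m
  proof -
    assume mM: "m \<in> M"
    show ?thesis
    proof (cases "mle m \<nu>'")
      case True then show ?thesis using pr'[OF True] by (simp add: Q_def)
    next
      case False
      then obtain i where i: "m i > \<nu>' i" by (auto simp: mle_def not_le)
      have "m i \<le> \<nu> i" using mM by (simp add: M_def mle_def)
      then have "i = j" using i nui by (metis not_le)
      then have "m j > \<nu>' j" using i by simp
      then show ?thesis using False by simp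
    qed
  qed
  have first: "(\<Sum>m\<in>M. real (\<nu>' j choose m j) * Q m * f (mabs m)) = (\<Sum>m\<in>M'. real (mbinom \<nu>' m) * f (mabs m))"
  proof -
    have "(\<Sum>m\<in>M. real (\<nu>' j choose m j) * Q m * f (mabs m)) = (\<Sum>m\<in>M. if mle m \<nu>' then real (mbinom \<nu>' m) * f (mabs m) else 0)"
      by (rule sum.cong[OF refl]) (simp add: b)
    also have "\<dots> = (\<Sum>m\<in>{m\<in>M. mle m \<nu>'}. real (mbinom \<nu>' m) * f (mabs m))"
      by (rule sum.inter_filter[OF fM, symmetric])
    also have "{m\<in>M. mle m \<nu>'} = M'" using M'M by (auto simp: M'_def)
    finally show ?thesis .
  qed
  have second: "(\<Sum>m\<in>M. (if m j = 0 then 0 else real (\<nu>' j choose (m j - 1)) * Q m) * f (mabs m))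
      = (\<Sum>m\<in>M'. real (mbinom \<nu>' m) * f (Suc (mabs m)))"
  proof -
    have "(\<Sum>m\<in>M. (if m j = 0 then 0 else real (\<nu>' j choose (m j - 1)) * Q m) * f (mabs m))
      = (\<Sum>m\<in>M. if m j \<noteq> 0 then real (\<nu>' j choose (m j - 1)) * Q m * f (mabs m) else 0)"
      by (rule sum.cong[OF refl]) simp
    also have "\<dots> = (\<Sum>m\<in>{m\<in>M. m j \<noteq> 0}. real (\<nu>' j choose (m j - 1)) * Q m * f (mabs m))"
      by (rule sum.inter_filter[OF fM, symmetric])
    also have "\<dots> = (\<Sum>m\<in>M'. real (mbinom \<nu>' m) * f (Suc (mabs m)))"
    proof (rule sum.reindex_bij_witness[where i = "\<lambda>m'. madd m' (unitidx j)" and j = "\<lambda>m. m(j := m j - 1)"])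
      fix m assume "m \<in> {m\<in>M. m j \<noteq> 0}"
      then have mj: "m j \<noteq> 0" and mM: "mle m \<nu>" by (auto simp: M_def)
      show "madd (m(j := m j - 1)) (unitidx j) = m"
        using mj by (auto simp: madd_def unitidx_def fun_eq_iff)
      have mM'': "m(j := m j - 1) \<in> M'" unfolding M'_def mle_def
      proof (intro CollectI allI)
        fix i
        have le: "m i \<le> \<nu> i" using mM by (simp add: mle_def)
        show "(m(j := m j - 1)) i \<le> \<nu>' i"
        proof (cases "i = j")
          case True then show ?thesis using le nuj by simp
        next
          case False then show ?thesis using le nui[OF False] by simp
        qed
      qed
      then show "m(j := m j - 1) \<in> M'" .
      have mm: "m = madd (m(j := m j - 1)) (unitidx j)"
        using mj by (auto simp: madd_def unitidx_def fun_eq_iff)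
      have fm: "finsupp (m(j := m j - 1))"
        using finsupp_mle[OF mM Suc.prems] unfolding finsupp_def
        by (rule finite_subset[rotated]) (auto simp: msupp_def)
      have abs: "mabs m = Suc (mabs (m(j := m j - 1)))"
      proof -
        have "mabs m = mabs (madd (m(j := m j - 1)) (unitidx j))" by (rule arg_cong[OF mm])
        also have "\<dots> = Suc (mabs (m(j := m j - 1)))"
          using mabs_madd[OF fm finsupp_unitidx] mabs_unitidx by simp
        finally show ?thesis .
      qed
      from mM'' have "real (mbinom \<nu>' (m(j := m j - 1))) = real (\<nu>' j choose (m j - 1)) * Q m"
        using pr' by (simp add: M'_def Q_def)
      then show "real (mbinom \<nu>' (m(j := m j - 1))) * f (Suc (mabs (m(j := m j - 1)))) =
            real (\<nu>' j choose (m j - 1)) * Q m * f (mabs m)" using abs by simp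
    next
      fix m' assume m': "m' \<in> M'"
      show "(madd m' (unitidx j))(j := madd m' (unitidx j) j - 1) = m'"
        by (auto simp: madd_def unitidx_def fun_eq_iff)
      show "madd m' (unitidx j) \<in> {m\<in>M. m j \<noteq> 0}"
        using m' nuj nui by (auto simp: M_def M'_def mle_def madd_def unitidx_def)
    qed
    finally show ?thesis .
  qed
  have "(\<Sum>m\<in>M. real (mbinom \<nu> m) * f (mabs m))
      = (\<Sum>m\<in>M. real (\<nu>' j choose m j) * Q m * f (mabs m))
        + (\<Sum>m\<in>M. (if m j = 0 then 0 else real (\<nu>' j choose (m j - 1)) * Q m) * f (mabs m))"
    unfolding a by (simp add: sum.distrib[symmetric] algebra_simps)
  also have "\<dots> = (\<Sum>k\<le>n. real (n choose k) * f k) + (\<Sum>k\<le>n. real (n choose k) * f (Suc k))"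
    unfolding first second M'_def using Suc.hyps(1)[OF n f'] Suc.hyps(1)[OF n f', of "\<lambda>k. f (Suc k)"]
    by (simp add: n)
  also have "\<dots> = (\<Sum>k\<le>Suc n. real (Suc n choose k) * f k)" by (rule pascal1)
  finally show ?case using Suc.hyps(2) by (simp add: M_def)
qed



definition rel :: "bool \<Rightarrow> real \<Rightarrow> real \<Rightarrow> bool" where
  "rel b x y = (if b then x = y else x \<le> y)"

lemma rel_eq: "x = y \<Longrightarrow> rel b x y" by (simp add: rel_def)
lemma rel_trans: "rel b x y \<Longrightarrow> rel b y z \<Longrightarrow> rel b x z" by (auto simp: rel_def split: if_splits)
lemma rel_mult: "0 \<le> k \<Longrightarrow> rel b x y \<Longrightarrow> rel b (k * x) (k * y)"
  by (auto simp: rel_def mult_left_mono split: if_splits)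
lemma rel_sum: "(\<And>i. i \<in> I \<Longrightarrow> rel b (f i) (g i)) \<Longrightarrow> rel b (sum f I) (sum g I)"
  by (cases b) (auto simp: rel_def intro: sum_mono sum.cong)

lemma mpow_nonneg: "(\<And>j. \<rho> j \<ge> 0) \<Longrightarrow> mpow \<rho> \<nu> \<ge> 0"
  unfolding mpow_def by (intro prod_nonneg zero_le_power) auto

lemma main_gen:
  fixes c :: real and \<rho> :: "nat \<Rightarrow> real" and A :: "(nat \<Rightarrow> nat) \<Rightarrow> nat \<Rightarrow> real"
  assumes c_pos: "c > 0"
    and rho_nonneg: "\<And>j. \<rho> j \<ge> 0"
    and A_zero: "\<And>\<nu>. finsupp \<nu> \<Longrightarrow> A \<nu> 0 = (if \<nu> = (\<lambda>_. 0) then 1 else 0)"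
    and A_vanish: "\<And>\<nu> l. finsupp \<nu> \<Longrightarrow> l > mabs \<nu> \<Longrightarrow> A \<nu> l = 0"
    and recr: "\<And>\<nu> j l. finsupp \<nu> \<Longrightarrow> 1 \<le> l \<Longrightarrow> l \<le> mabs (madd \<nu> (unitidx j)) \<Longrightarrow>
            rel b (A (madd \<nu> (unitidx j)) l)
              (\<Sum>m\<in>{m. mle m \<nu>}. real (mbinom \<nu> m) * c * mpow \<rho> (madd (msub \<nu> m) (unitidx j))
                  * fact (mabs \<nu> - mabs m + 2) * A m (l - 1))"
  shows "finsupp \<nu> \<Longrightarrow> rel b (A \<nu> l) (c ^ l * mpow \<rho> \<nu> * aa (mabs \<nu>) l)"
proof (induction "mabs \<nu>" arbitrary: \<nu> l rule: less_induct)
  case less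
  show ?case
  proof (cases "l = 0")
    case True
    show ?thesis
    proof (cases "\<nu> = (\<lambda>_. 0)")
      case True with \<open>l = 0\<close> show ?thesis using A_zero[OF less.prems] by (intro rel_eq) (simp add: L5)
    next
      case False
      then have "mabs \<nu> \<noteq> 0" using mabs_zero_iff[OF less.prems] by simp
      with False \<open>l = 0\<close> show ?thesis using A_zero[OF less.prems] by (intro rel_eq) (simp add: L5)
    qed
  next
    case l0: False
    show ?thesis
    proof (cases "l > mabs \<nu>")
      case True then show ?thesis using A_vanish[OF less.prems True] L4[OF True] by (intro rel_eq) simp
    next
      case False
      then have l1: "1 \<le> l" and l2: "l \<le> mabs \<nu>" using l0 by auto
      have nz: "\<nu> \<noteq> (\<lambda>_. 0)" using l1 l2 by auto
      obtain \<nu>' j where f': "finsupp \<nu>'" and nu: "\<nu> = madd \<nu>' (unitidx j)"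
        using decomp[OF less.prems nz] by blast
      define n where "n = mabs \<nu>'"
      have absn: "mabs \<nu> = Suc n" using nu mabs_madd[OF f' finsupp_unitidx] mabs_unitidx n_def by simp
      define coef where "coef m = real (mbinom \<nu>' m) * c * mpow \<rho> (madd (msub \<nu>' m) (unitidx j))
                  * fact (mabs \<nu>' - mabs m + 2)" for m
      define M' where "M' = {m. mle m \<nu>'}"
      have r1: "rel b (A \<nu> l) (\<Sum>m\<in>M'. coef m * A m (l - 1))"
        using recr[OF f' l1] l2 unfolding nu coef_def M'_def by simp
      have r2: "rel b (\<Sum>m\<in>M'. coef m * A m (l - 1))
                  (\<Sum>m\<in>M'. coef m * (c ^ (l - 1) * mpow \<rho> m * aa (mabs m) (l - 1)))"
      proof (rule rel_sum, rule rel_mult)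
        fix m assume mM: "m \<in> M'"
        show "0 \<le> coef m" unfolding coef_def
          using c_pos mpow_nonneg[OF rho_nonneg] by (intro mult_nonneg_nonneg) auto
        have mle: "mle m \<nu>'" using mM by (simp add: M'_def)
        have fm: "finsupp m" using finsupp_mle[OF mle f'] .
        have "mabs m \<le> n" using mabs_mle[OF mle f'] n_def by simp
        then have lt: "mabs m < mabs \<nu>" using absn by simp
        show "rel b (A m (l - 1)) (c ^ (l - 1) * mpow \<rho> m * aa (mabs m) (l - 1))"
          by (rule less.hyps[OF lt fm])
      qed
      have eq: "(\<Sum>m\<in>M'. coef m * (c ^ (l - 1) * mpow \<rho> m * aa (mabs m) (l - 1)))
           = c ^ l * mpow \<rho> \<nu> * aa (mabs \<nu>) l"
      proof -
        have "(\<Sum>m\<in>M'. coef m * (c ^ (l - 1) * mpow \<rho> m * aa (mabs m) (l - 1)))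
            = (\<Sum>m\<in>M'. (c ^ l * mpow \<rho> \<nu>) * (real (mbinom \<nu>' m) * (fact (n - mabs m + 2) * aa (mabs m) (l - 1))))"
        proof (rule sum.cong[OF refl])
          fix m assume mM: "m \<in> M'"
          have mle: "mle m \<nu>'" using mM by (simp add: M'_def)
          have fm: "finsupp m" using finsupp_mle[OF mle f'] .
          have fs: "finsupp (madd (msub \<nu>' m) (unitidx j))"
            by (rule finsupp_madd[OF finsupp_msub[OF f'] finsupp_unitidx])
          have "madd (madd (msub \<nu>' m) (unitidx j)) m = \<nu>"
          proof (rule ext)
            fix i have "m i \<le> \<nu>' i" using mle by (simp add: mle_def)
            then show "madd (madd (msub \<nu>' m) (unitidx j)) m i = \<nu> i"
              by (simp add: nu madd_def msub_def)
          qed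
          then have pw: "mpow \<rho> (madd (msub \<nu>' m) (unitidx j)) * mpow \<rho> m = mpow \<rho> \<nu>"
            using mpow_madd[OF fs fm, of \<rho>] by simp
          have cl: "c * c ^ (l - 1) = c ^ l" using l1 by (cases l) auto
          show "coef m * (c ^ (l - 1) * mpow \<rho> m * aa (mabs m) (l - 1))
              = (c ^ l * mpow \<rho> \<nu>) * (real (mbinom \<nu>' m) * (fact (n - mabs m + 2) * aa (mabs m) (l - 1)))"
          proof -
            have "coef m * (c ^ (l - 1) * mpow \<rho> m * aa (mabs m) (l - 1))
               = (real (mbinom \<nu>' m) * (fact (n - mabs m + 2) * aa (mabs m) (l - 1))) * (c * c ^ (l - 1))
                  * (mpow \<rho> (madd (msub \<nu>' m) (unitidx j)) * mpow \<rho> m)"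
              unfolding coef_def n_def by (simp only: mult_ac)
            also have "\<dots> = (real (mbinom \<nu>' m) * (fact (n - mabs m + 2) * aa (mabs m) (l - 1))) * c ^ l * mpow \<rho> \<nu>"
              by (simp only: pw cl)
            finally show ?thesis by (simp only: mult_ac)
          qed
        qed
        also have "\<dots> = (c ^ l * mpow \<rho> \<nu>) * (\<Sum>m\<in>M'. real (mbinom \<nu>' m) * (fact (n - mabs m + 2) * aa (mabs m) (l - 1)))"
          by (simp add: sum_distrib_left)
        also have "(\<Sum>m\<in>M'. real (mbinom \<nu>' m) * (fact (n - mabs m + 2) * aa (mabs m) (l - 1)))
             = (\<Sum>k\<le>n. real (n choose k) * (fact (n - k + 2) * aa k (l - 1)))"
          unfolding M'_def n_def by (rule mvand[OF f'])
        also have "\<dots> = aa (Suc n) (Suc (l - 1))" using L2[of n "l - 1"] by (simp add: mult.assoc)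
        also have "Suc (l - 1) = l" using l1 by simp
        finally show ?thesis using absn by simp
      qed
      show ?thesis using rel_trans[OF r1 r2] eq by simp
    qed
  qed
qed

theorem mainTheorem9:
  fixes c :: real and \<rho> :: "nat \<Rightarrow> real" and A :: "(nat \<Rightarrow> nat) \<Rightarrow> nat \<Rightarrow> real"
  assumes c_pos: "c > 0"
    and rho_nonneg: "\<And>j. \<rho> j \<ge> 0"
    and A_zero: "\<And>\<nu>. finsupp \<nu> \<Longrightarrow> A \<nu> 0 = (if \<nu> = (\<lambda>_. 0) then 1 else 0)"
    and A_vanish: "\<And>\<nu> l. finsupp \<nu> \<Longrightarrow> l > mabs \<nu> \<Longrightarrow> A \<nu> l = 0"
  shows "((\<forall>\<nu> j l. finsupp \<nu> \<longrightarrow> 1 \<le> l \<longrightarrow> l \<le> mabs (madd \<nu> (unitidx j)) \<longrightarrow>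
            A (madd \<nu> (unitidx j)) l \<le>
              (\<Sum>m\<in>{m. mle m \<nu>}. real (mbinom \<nu> m) * c * mpow \<rho> (madd (msub \<nu> m) (unitidx j))
                  * fact (mabs \<nu> - mabs m + 2) * A m (l - 1)))
         \<longrightarrow> (\<forall>\<nu> l. finsupp \<nu> \<longrightarrow> \<nu> \<noteq> (\<lambda>_. 0) \<longrightarrow> 1 \<le> l \<longrightarrow> l \<le> mabs \<nu> \<longrightarrow>
            A \<nu> l \<le> c ^ l * mpow \<rho> \<nu> *
              (\<Sum>k=1..l. (-1) ^ (l + k) * fact (mabs \<nu> + 2 * k - 1)
                  / (fact (2 * k - 1) * fact (l - k) * fact k))))
    \<and> ((\<forall>\<nu> j l. finsupp \<nu> \<longrightarrow> 1 \<le> l \<longrightarrow> l \<le> mabs (madd \<nu> (unitidx j)) \<longrightarrow>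
            A (madd \<nu> (unitidx j)) l =
              (\<Sum>m\<in>{m. mle m \<nu>}. real (mbinom \<nu> m) * c * mpow \<rho> (madd (msub \<nu> m) (unitidx j))
                  * fact (mabs \<nu> - mabs m + 2) * A m (l - 1)))
         \<longrightarrow> (\<forall>\<nu> l. finsupp \<nu> \<longrightarrow> \<nu> \<noteq> (\<lambda>_. 0) \<longrightarrow> 1 \<le> l \<longrightarrow> l \<le> mabs \<nu> \<longrightarrow>
            A \<nu> l = c ^ l * mpow \<rho> \<nu> *
              (\<Sum>k=1..l. (-1) ^ (l + k) * fact (mabs \<nu> + 2 * k - 1)
                  / (fact (2 * k - 1) * fact (l - k) * fact k))))"
  proof -
  have gen: "rel b (A \<nu> l) (c ^ l * mpow \<rho> \<nu> * (\<Sum>k=1..l. (-1) ^ (l + k) * fact (mabs \<nu> + 2 * k - 1)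
                  / (fact (2 * k - 1) * fact (l - k) * fact k)))"
    if recr: "\<And>\<nu> j l. finsupp \<nu> \<Longrightarrow> 1 \<le> l \<Longrightarrow> l \<le> mabs (madd \<nu> (unitidx j)) \<Longrightarrow>
            rel b (A (madd \<nu> (unitidx j)) l)
              (\<Sum>m\<in>{m. mle m \<nu>}. real (mbinom \<nu> m) * c * mpow \<rho> (madd (msub \<nu> m) (unitidx j))
                  * fact (mabs \<nu> - mabs m + 2) * A m (l - 1))"
      and f: "finsupp \<nu>" and nz: "\<nu> \<noteq> (\<lambda>_. 0)" and l1: "1 \<le> l" and l2: "l \<le> mabs \<nu>" for b \<nu> l
  proof -
    have "mabs \<nu> \<noteq> 0" using mabs_zero_iff[OF f] nz by simp
    then have "1 \<le> mabs \<nu>" by simp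
    then have "aa (mabs \<nu>) l = (\<Sum>k=1..l. (-1) ^ (l + k) * fact (mabs \<nu> + 2 * k - 1)
                  / (fact (2 * k - 1) * fact (l - k) * fact k))" (is "_ = ?S") by (rule L6)
    have mg: "rel b (A \<nu> l) (c ^ l * mpow \<rho> \<nu> * aa (mabs \<nu>) l)"
      by (rule main_gen[OF c_pos rho_nonneg A_zero A_vanish recr f])
    show ?thesis using mg unfolding \<open>aa (mabs \<nu>) l = ?S\<close> .
  qed
  show ?thesis
  proof (intro conjI impI allI)
    fix \<nu> l
    assume H: "\<forall>\<nu> j l. finsupp \<nu> \<longrightarrow> 1 \<le> l \<longrightarrow> l \<le> mabs (madd \<nu> (unitidx j)) \<longrightarrow>
            A (madd \<nu> (unitidx j)) l \<le>
              (\<Sum>m\<in>{m. mle m \<nu>}. real (mbinom \<nu> m) * c * mpow \<rho> (madd (msub \<nu> m) (unitidx j))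
                  * fact (mabs \<nu> - mabs m + 2) * A m (l - 1))"
      and f: "finsupp \<nu>" and nz: "\<nu> \<noteq> (\<lambda>_. 0)" and l1: "1 \<le> l" and l2: "l \<le> mabs \<nu>"
    have "rel False (A \<nu> l) (c ^ l * mpow \<rho> \<nu> * (\<Sum>k=1..l. (-1) ^ (l + k) * fact (mabs \<nu> + 2 * k - 1)
                  / (fact (2 * k - 1) * fact (l - k) * fact k)))"
    proof (rule gen[OF _ f nz l1 l2])
      fix \<nu>' j l' assume a1: "finsupp \<nu>'" and a2: "1 \<le> l'" and a3: "l' \<le> mabs (madd \<nu>' (unitidx j))"
      show "rel False (A (madd \<nu>' (unitidx j)) l')
              (\<Sum>m\<in>{m. mle m \<nu>'}. real (mbinom \<nu>' m) * c * mpow \<rho> (madd (msub \<nu>' m) (unitidx j))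
                  * fact (mabs \<nu>' - mabs m + 2) * A m (l' - 1))"
        unfolding rel_def if_False by (rule H[rule_format, OF a1 a2 a3])
    qed
    then show "A \<nu> l \<le> c ^ l * mpow \<rho> \<nu> * (\<Sum>k=1..l. (-1) ^ (l + k) * fact (mabs \<nu> + 2 * k - 1)
                  / (fact (2 * k - 1) * fact (l - k) * fact k))" by (simp add: rel_def)
  next
    fix \<nu> l
    assume H: "\<forall>\<nu> j l. finsupp \<nu> \<longrightarrow> 1 \<le> l \<longrightarrow> l \<le> mabs (madd \<nu> (unitidx j)) \<longrightarrow>
            A (madd \<nu> (unitidx j)) l =
              (\<Sum>m\<in>{m. mle m \<nu>}. real (mbinom \<nu> m) * c * mpow \<rho> (madd (msub \<nu> m) (unitidx j))
                  * fact (mabs \<nu> - mabs m + 2) * A m (l - 1))"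
      and f: "finsupp \<nu>" and nz: "\<nu> \<noteq> (\<lambda>_. 0)" and l1: "1 \<le> l" and l2: "l \<le> mabs \<nu>"
    have "rel True (A \<nu> l) (c ^ l * mpow \<rho> \<nu> * (\<Sum>k=1..l. (-1) ^ (l + k) * fact (mabs \<nu> + 2 * k - 1)
                  / (fact (2 * k - 1) * fact (l - k) * fact k)))"
    proof (rule gen[OF _ f nz l1 l2])
      fix \<nu>' j l' assume a1: "finsupp \<nu>'" and a2: "1 \<le> l'" and a3: "l' \<le> mabs (madd \<nu>' (unitidx j))"
      show "rel True (A (madd \<nu>' (unitidx j)) l')
              (\<Sum>m\<in>{m. mle m \<nu>'}. real (mbinom \<nu>' m) * c * mpow \<rho> (madd (msub \<nu>' m) (unitidx j))
                  * fact (mabs \<nu>' - mabs m + 2) * A m (l' - 1))"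
        unfolding rel_def if_True by (rule H[rule_format, OF a1 a2 a3])
    qed
    then show "A \<nu> l = c ^ l * mpow \<rho> \<nu> * (\<Sum>k=1..l. (-1) ^ (l + k) * fact (mabs \<nu> + 2 * k - 1)
                  / (fact (2 * k - 1) * fact (l - k) * fact k))" by (simp add: rel_def)
  qed
qed

end
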